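(* Let $k\ge r\ge 3$ and $t\ge 0$ be integers and let $\pi\in\mathbb{C}(k,r)$ be a partition in which both $2t+1$ and $2t+2$ occur as parts. Then every part equal to $2t+2$ has a mark in $GG(\pi)$ strictly greater than the mark of the part $2t+1$ in $GG(\pi)$.
   Context: A partition $\pi=(\pi_1,\dots,\pi_\ell)$ is a finite non-increasing sequence of positive integers. Göllnitz–Gordon marking: $GG(\pi)$ assigns a positive integer (mark) to each part, processing the parts from smallest to largest ($\pi_\ell,\dots,\pi_1$); $\pi_i$ receives the smallest positive integer different from the marks of all parts $\pi_g$ with $g>i$ and $\pi_i-\pi_g\le 2$, where $\pi_i-\pi_g<2$ is required when $\pi_i$ is odd. $\mathbb{C}(k,r)$: the set of partitions $\pi$ such that (i) no odd part is repeated; (ii) $\pi_i\ge\pi_{i+k-1}+2$ for $1\le i\le\ell-k+1$, with strict inequality if $\pi_i$ is even; (iii) at most $r-1$ parts are $\le 2$. (In particular $2t+1$ occurs at most once, so its mark is well defined.) *)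

theory Defs
  imports Main
begin

text \<open>Partitions are lists of positive naturals in non-increasing order;
  list index 0 corresponds to the largest part pi_1.\<close>

definition is_partition :: "nat list \<Rightarrow> bool" where
  "is_partition p \<longleftrightarrow> sorted_wrt (\<ge>) p \<and> (\<forall>x\<in>set p. 0 < x)"

text \<open>Goellnitz-Gordon marking. gg_marks p is the list of marks, aligned with p.
  Marks are computed from the smallest part (end of list) to the largest.\<close>

fun gg_marks :: "nat list \<Rightarrow> nat list" where
  "gg_marks [] = []"
| "gg_marks (x # xs) =
     (let ms = gg_marks xs;
          forb = {ms ! j | j. j < length xs \<and> int x - int (xs ! j) \<le> 2
                               \<and> (odd x \<longrightarrow> int x - int (xs ! j) < 2)}
      in (LEAST m. 0 < m \<and> m \<notin> forb) # ms)"

definition in_C :: "nat \<Rightarrow> nat \<Rightarrow> nat list \<Rightarrow> bool" where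
  "in_C k r p \<longleftrightarrow> is_partition p
     \<and> (\<forall>i j. i < j \<and> j < length p \<and> p ! i = p ! j \<longrightarrow> even (p ! i))
     \<and> (\<forall>i. i + k - 1 < length p \<longrightarrow>
            p ! i \<ge> p ! (i + k - 1) + 2 \<and> (even (p ! i) \<longrightarrow> p ! i > p ! (i + k - 1) + 2))
     \<and> card {i. i < length p \<and> p ! i \<le> 2} \<le> r - 1"

end

theory Submission
  imports Defs
begin

definition FS :: "nat list \<Rightarrow> nat \<Rightarrow> nat set" where
  "FS p i = {gg_marks p ! l | l. i < l \<and> l < length p \<and> int (p!i) - int (p!l) \<le> 2
               \<and> (odd (p!i) \<longrightarrow> int (p!i) - int (p!l) < 2)}"

lemma gg_len[simp]: "length (gg_marks p) = length p"
  by (induction p) (auto simp: Let_def)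

lemma gg_Suc[simp]: "gg_marks (x#xs) ! Suc j = gg_marks xs ! j"
  by (simp add: Let_def)

lemma gg_char: "i < length p \<Longrightarrow> gg_marks p ! i = (LEAST m. 0 < m \<and> m \<notin> FS p i)"
proof (induction p arbitrary: i)
  case Nil then show ?case by simp
next
  case (Cons x xs)
  show ?case
  proof (cases i)
    case 0
    have "{gg_marks xs ! j | j. j < length xs \<and> int x - int (xs ! j) \<le> 2
                               \<and> (odd x \<longrightarrow> int x - int (xs ! j) < 2)} = FS (x#xs) 0"
    proof (rule set_eqI, rule iffI)
      fix m assume "m \<in> {gg_marks xs ! j | j. j < length xs \<and> int x - int (xs ! j) \<le> 2
                               \<and> (odd x \<longrightarrow> int x - int (xs ! j) < 2)}"
      then obtain j where j: "m = gg_marks xs ! j" "j < length xs" "int x - int (xs ! j) \<le> 2"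
         "odd x \<longrightarrow> int x - int (xs ! j) < 2" by blast
      show "m \<in> FS (x#xs) 0" unfolding FS_def
        by (rule CollectI, rule exI[of _ "Suc j"]) (use j in \<open>simp del: gg_marks.simps\<close>)
    next
      fix m assume "m \<in> FS (x#xs) 0"
      then obtain l where l: "m = gg_marks (x#xs) ! l" "0 < l" "l < length (x#xs)"
        "int ((x#xs)!0) - int ((x#xs) ! l) \<le> 2"
         "odd ((x#xs)!0) \<longrightarrow> int ((x#xs)!0) - int ((x#xs) ! l) < 2" unfolding FS_def by blast
      then obtain j where "l = Suc j" by (cases l) auto
      with l show "m \<in> {gg_marks xs ! j | j. j < length xs \<and> int x - int (xs ! j) \<le> 2
                               \<and> (odd x \<longrightarrow> int x - int (xs ! j) < 2)}"
        by (auto simp del: gg_marks.simps)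
    qed
    then show ?thesis using 0 by (simp only: gg_marks.simps Let_def nth_Cons_0)
  next
    case (Suc i')
    have "FS (x#xs) i = FS xs i'"
    proof (rule set_eqI, rule iffI)
      fix m assume "m \<in> FS (x#xs) i"
      then obtain l where l: "m = gg_marks (x#xs) ! l" "i < l" "l < length (x#xs)"
        "int ((x#xs)!i) - int ((x#xs) ! l) \<le> 2"
         "odd ((x#xs)!i) \<longrightarrow> int ((x#xs)!i) - int ((x#xs) ! l) < 2" unfolding FS_def by blast
      then obtain j where lj: "l = Suc j" using Suc by (cases l) auto
      show "m \<in> FS xs i'" unfolding FS_def
        by (rule CollectI, rule exI[of _ j]) (use l lj Suc in \<open>simp del: gg_marks.simps\<close>)
    next
      fix m assume "m \<in> FS xs i'"
      then obtain j where j: "m = gg_marks xs ! j" "i' < j" "j < length xs"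
        "int (xs!i') - int (xs ! j) \<le> 2"
         "odd (xs!i') \<longrightarrow> int (xs!i') - int (xs ! j) < 2" unfolding FS_def by blast
      show "m \<in> FS (x#xs) i" unfolding FS_def
        by (rule CollectI, rule exI[of _ "Suc j"]) (use j Suc in \<open>simp del: gg_marks.simps\<close>)
    qed
    then show ?thesis using Cons Suc by (simp del: gg_marks.simps)
  qed
qed

lemma FS_finite: "finite (FS p i)"
proof -
  have "FS p i \<subseteq> (\<lambda>l. gg_marks p ! l) ` {..<length p}" unfolding FS_def by auto
  then show ?thesis using finite_subset by blast
qed

theorem lemma2p10:
  fixes k r t :: nat and p :: "nat list"
  assumes "k \<ge> r" and "r \<ge> 3"
    and "in_C k r p"
    and "2 * t + 1 \<in> set p" and "2 * t + 2 \<in> set p"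
  shows "\<forall>i j. i < length p \<and> j < length p \<and> p ! i = 2 * t + 2 \<and> p ! j = 2 * t + 1
           \<longrightarrow> gg_marks p ! i > gg_marks p ! j"
proof (intro allI impI)
  fix i j assume h: "i < length p \<and> j < length p \<and> p ! i = 2 * t + 2 \<and> p ! j = 2 * t + 1"
  have srt: "sorted_wrt (\<ge>) p" using assms(3) unfolding in_C_def is_partition_def by blast
  have mono: "\<And>a b. a < b \<Longrightarrow> b < length p \<Longrightarrow> p ! b \<le> p ! a"
    using srt by (simp add: sorted_wrt_iff_nth_less)
  have ij: "i < j"
  proof (rule ccontr)
    assume "\<not> i < j"
    then have "j \<le> i" by simp
    then show False using h mono[of j i] by (cases "j = i") auto
  qed
  have sub: "FS p j \<union> {gg_marks p ! j} \<subseteq> FS p i"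
  proof
    fix m assume "m \<in> FS p j \<union> {gg_marks p ! j}"
    then show "m \<in> FS p i"
    proof
      assume "m \<in> FS p j"
      then obtain l where l: "m = gg_marks p ! l" "j < l" "l < length p"
        "int (p!j) - int (p!l) \<le> 2" "odd (p!j) \<longrightarrow> int (p!j) - int (p!l) < 2"
        unfolding FS_def by blast
      have "p ! l \<le> p ! j" using mono l by simp
      then show ?thesis unfolding FS_def using l h ij
        by (intro CollectI exI[of _ l]) auto
    next
      assume "m \<in> {gg_marks p ! j}"
      then show ?thesis unfolding FS_def using h ij
        by (intro CollectI exI[of _ j]) auto
    qed
  qed
  define mj where "mj = gg_marks p ! j"
  define mi where "mi = gg_marks p ! i"
  have mj: "mj = (LEAST m. 0 < m \<and> m \<notin> FS p j)" using gg_char h mj_def by blast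
  have mi: "mi = (LEAST m. 0 < m \<and> m \<notin> FS p i)" using gg_char h mi_def by blast
  have ex: "\<exists>m. 0 < m \<and> m \<notin> FS p i"
  proof -
    obtain m where "m \<notin> FS p i \<union> {0}"
      using FS_finite[of p i] ex_new_if_finite[of "FS p i \<union> {0}"] infinite_UNIV_nat by auto
    then show ?thesis by auto
  qed
  have mi1: "0 < mi \<and> mi \<notin> FS p i" unfolding mi using LeastI_ex[OF ex] .
  have below: "\<And>n. 0 < n \<Longrightarrow> n < mj \<Longrightarrow> n \<in> FS p j"
    using not_less_Least mj by blast
  show "gg_marks p ! i > gg_marks p ! j"
    unfolding mi_def[symmetric] mj_def[symmetric]
  proof (rule ccontr)
    assume "\<not> mj < mi"
    then have "mi < mj \<or> mi = mj" by auto
    then show False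
    proof
      assume "mi < mj" then show False using below mi1 sub by blast
    next
      assume "mi = mj" then show False using mi1 sub mj_def by blast
    qed
  qed
qed

end
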